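(* Let $(X,f)$ be a dynamical system and let $x$ be a minimal point. Then for every $y$ with $(x,y)\in\mathrm{SProx}(f)$, the orbit closure $\overline{\{f^n(x):n\ge0\}}$ is the unique minimal set contained in $\overline{\{f^n(y):n\ge0\}}$. In particular, if $f(x)=x$, then (i) $x$ is the only minimal point in $\overline{\{f^n(y):n\ge0\}}$ for every $y\in\mathrm{SProx}(f)(x)$, and (ii) $\mathrm{SProx}(f)(x)=\bigcup_{y\in\mathrm{SProx}(f)(x)}\overline{\{f^n(y):n\ge0\}}$.
   Context: Dynamical system: compact metric space $X$ with metric $d$ and continuous $f$. A minimal set is a nonempty closed $f$-invariant set with no proper nonempty closed invariant subset; a minimal point is a point of some minimal set. $\mathrm{SProx}(f)=\{(x,y):\{n\in\mathbb N:d(f^nx,f^ny)<\varepsilon\}$ syndetic for every $\varepsilon>0\}$, where syndetic means meeting every subset of $\mathbb N$ with arbitrarily long runs of consecutive integers; $\mathrm{SProx}(f)(x)=\{y:(x,y)\in\mathrm{SProx}(f)\}$. *)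

theory Defs
  imports "HOL-Analysis.Analysis"
begin

definition dyn_system :: "'a::metric_space set \<Rightarrow> ('a \<Rightarrow> 'a) \<Rightarrow> bool" where
  "dyn_system X f \<longleftrightarrow> compact X \<and> continuous_on X f \<and> f ` X \<subseteq> X"

definition orbit_closure :: "('a::topological_space \<Rightarrow> 'a) \<Rightarrow> 'a \<Rightarrow> 'a set" where
  "orbit_closure f x = closure {(f ^^ n) x | n. True}"

definition minimal_set :: "'a::topological_space set \<Rightarrow> ('a \<Rightarrow> 'a) \<Rightarrow> 'a set \<Rightarrow> bool" where
  "minimal_set X f M \<longleftrightarrow> M \<noteq> {} \<and> M \<subseteq> X \<and> closed M \<and> f ` M \<subseteq> M \<and>
     (\<forall>N. N \<noteq> {} \<and> N \<subseteq> M \<and> closed N \<and> f ` N \<subseteq> N \<longrightarrow> N = M)"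

definition minimal_point :: "'a::topological_space set \<Rightarrow> ('a \<Rightarrow> 'a) \<Rightarrow> 'a \<Rightarrow> bool" where
  "minimal_point X f x \<longleftrightarrow> (\<exists>M. minimal_set X f M \<and> x \<in> M)"

definition thick :: "nat set \<Rightarrow> bool" where
  "thick T \<longleftrightarrow> (\<forall>L. \<exists>n. {n..<n+L} \<subseteq> T)"

definition syndetic :: "nat set \<Rightarrow> bool" where
  "syndetic S \<longleftrightarrow> (\<forall>T. thick T \<longrightarrow> S \<inter> T \<noteq> {})"

definition SProx :: "'a::metric_space set \<Rightarrow> ('a \<Rightarrow> 'a) \<Rightarrow> ('a \<times> 'a) set" where
  "SProx X f = {(x, y). x \<in> X \<and> y \<in> X \<and>
     (\<forall>e>0. syndetic {n. dist ((f ^^ n) x) ((f ^^ n) y) < e})}"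

definition SProx_at :: "'a::metric_space set \<Rightarrow> ('a \<Rightarrow> 'a) \<Rightarrow> 'a \<Rightarrow> 'a set" where
  "SProx_at X f x = {y. (x, y) \<in> SProx X f}"

end

theory Submission
  imports Defs
begin

lemma sep_compact:
  fixes S T :: "'a::metric_space set"
  assumes "compact S" "compact T" "S \<inter> T = {}" "S \<noteq> {}" "T \<noteq> {}"
  shows "\<exists>d>0. \<forall>p\<in>S. \<forall>q\<in>T. d \<le> dist p q"
proof -
  have "continuous_on S (\<lambda>p. infdist p T)"
    by (intro continuous_on_infdist continuous_on_id)
  then obtain p0 where p0: "p0 \<in> S" "\<forall>p\<in>S. infdist p0 T \<le> infdist p T"
    using continuous_attains_inf[OF assms(1) assms(4)] by blast
  have cT: "closed T" using assms(2) compact_imp_closed by blast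
  have "p0 \<notin> T" using p0 assms(3) by blast
  hence "infdist p0 T \<noteq> 0" using in_closed_iff_infdist_zero[OF cT assms(5)] by blast
  hence pos: "infdist p0 T > 0" using infdist_nonneg[of p0 T] by linarith
  show ?thesis
  proof (intro exI[of _ "infdist p0 T"] conjI ballI pos)
    fix p q assume "p \<in> S" "q \<in> T"
    thus "infdist p0 T \<le> dist p q" using p0(2) infdist_le[of q T p] by force
  qed
qed

lemma synd_gap:
  assumes "syndetic S"
  shows "\<exists>L. \<forall>n. \<exists>j. n \<le> j \<and> j < n + L \<and> j \<in> S"
proof (rule ccontr)
  assume "\<not> ?thesis"
  hence "\<forall>L. \<exists>n. {n..<n+L} \<subseteq> -S" by (metis ComplI atLeastLessThan_iff subsetI)
  hence "thick (-S)" unfolding thick_def by blast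
  thus False using assms unfolding syndetic_def by blast
qed

lemma gap_synd:
  assumes "\<forall>n. \<exists>j. n \<le> j \<and> j < n + L \<and> j \<in> S"
  shows "syndetic S"
  unfolding syndetic_def
proof (intro allI impI)
  fix T assume "thick T"
  then obtain n where "{n..<n+L} \<subseteq> T" unfolding thick_def by blast
  moreover obtain j where "n \<le> j" "j < n + L" "j \<in> S" using assms by blast
  ultimately show "S \<inter> T \<noteq> {}" by auto
qed

lemma funpow_X: "f ` X \<subseteq> X \<Longrightarrow> y \<in> X \<Longrightarrow> (f^^n) y \<in> X"
  by (induction n) auto

lemma funpow_inv: "f ` C \<subseteq> C \<Longrightarrow> (f^^n) ` C \<subseteq> C"
  by (induction n) auto

lemma funpow_cont: "continuous_on X f \<Longrightarrow> f ` X \<subseteq> X \<Longrightarrow> continuous_on X (f^^n)"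
proof (induction n)
  case 0 then show ?case by (simp add: continuous_on_id)
next
  case (Suc n)
  have "(f^^n) ` X \<subseteq> X" using funpow_inv[OF Suc.prems(2)] .
  hence "continuous_on ((f^^n) ` X) f" using Suc.prems(1) continuous_on_subset by blast
  then show ?case using continuous_on_compose[OF Suc.IH[OF Suc.prems]] by simp
qed

lemma funpow_apply_add: "(f^^(k+m)) y = (f^^k) ((f^^m) y)"
  by (simp add: funpow_add)

lemma funpow_fix: "f x = x \<Longrightarrow> (f^^n) x = x"
  by (induction n) auto

lemma oc_self: "y \<in> orbit_closure f y"
  unfolding orbit_closure_def using closure_subset
  by (metis (mono_tags, lifting) funpow_0 mem_Collect_eq subsetD)

lemma oc_min:
  assumes "closed C" "f ` C \<subseteq> C" "y \<in> C"
  shows "orbit_closure f y \<subseteq> C"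
  unfolding orbit_closure_def
proof (rule closure_minimal[OF _ assms(1)])
  show "{(f ^^ n) y |n. True} \<subseteq> C" using funpow_inv[OF assms(2)] assms(3) by blast
qed

lemma oc_sub:
  assumes "dyn_system X f" "y \<in> X"
  shows "orbit_closure f y \<subseteq> X"
  using assms oc_min[of X f y] compact_imp_closed unfolding dyn_system_def by blast

lemma oc_closed: "closed (orbit_closure f y)"
  unfolding orbit_closure_def by simp

lemma oc_inv:
  assumes "dyn_system X f" "y \<in> X"
  shows "f ` orbit_closure f y \<subseteq> orbit_closure f y"
proof -
  have c: "continuous_on (orbit_closure f y) f"
    using assms oc_sub[OF assms] continuous_on_subset unfolding dyn_system_def by blast
  have "f ` {(f ^^ n) y |n. True} \<subseteq> {(f ^^ n) y |n. True}"
  proof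
    fix z assume "z \<in> f ` {(f ^^ n) y |n. True}"
    then obtain n where "z = f ((f^^n) y)" by blast
    hence "z = (f^^(Suc n)) y" by simp
    thus "z \<in> {(f ^^ n) y |n. True}" by blast
  qed
  hence "f ` {(f ^^ n) y |n. True} \<subseteq> orbit_closure f y"
    unfolding orbit_closure_def using closure_subset by blast
  thus ?thesis using image_closure_subset[OF c[unfolded orbit_closure_def]] unfolding orbit_closure_def
    by simp
qed

lemma minimal_oc:
  assumes "dyn_system X f" "minimal_set X f M" "z \<in> M"
  shows "orbit_closure f z = M"
proof -
  have MX: "M \<subseteq> X" "closed M" "f ` M \<subseteq> M" using assms(2) unfolding minimal_set_def by auto
  have min: "\<And>N. N \<noteq> {} \<Longrightarrow> N \<subseteq> M \<Longrightarrow> closed N \<Longrightarrow> f ` N \<subseteq> N \<Longrightarrow> N = M"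
    using assms(2) unfolding minimal_set_def by blast
  have zX: "z \<in> X" using MX assms(3) by blast
  show ?thesis
  proof (rule min)
    show "orbit_closure f z \<subseteq> M" using oc_min[OF MX(2,3) assms(3)] .
    show "orbit_closure f z \<noteq> {}" using oc_self by blast
    show "closed (orbit_closure f z)" by (rule oc_closed)
    show "f ` orbit_closure f z \<subseteq> orbit_closure f z" by (rule oc_inv[OF assms(1) zX])
  qed
qed

lemma window_cont:
  fixes L :: nat
  assumes "\<And>i. continuous_on X (g i)" "q \<in> X" "e > 0"
  shows "\<exists>\<delta>>0. \<forall>w\<in>X. dist w q < \<delta> \<longrightarrow> (\<forall>i<L. dist (g i w) (g i q) < e)"
proof (induction L)
  case 0 then show ?case by (intro exI[of _ 1]) simp
next
  case (Suc L)
  then obtain d1 where d1: "d1 > 0" "\<forall>w\<in>X. dist w q < d1 \<longrightarrow> (\<forall>i<L. dist (g i w) (g i q) < e)" by blast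
  obtain d2 where d2: "d2 > 0" "\<forall>w\<in>X. dist w q < d2 \<longrightarrow> dist (g L w) (g L q) < e"
    using assms(1)[of L] assms(2,3) unfolding continuous_on_iff by blast
  show ?case
  proof (intro exI[of _ "min d1 d2"] conjI ballI impI allI)
    show "min d1 d2 > 0" using d1 d2 by simp
    fix w i assume w: "w \<in> X" "dist w q < min d1 d2" and i: "i < Suc L"
    show "dist (g i w) (g i q) < e"
    proof (cases "i = L")
      case True then show ?thesis using d2 w by simp
    next
      case False then have "i < L" using i by simp
      then show ?thesis using d1 w by simp
    qed
  qed
qed

lemma minset_compact:
  assumes "dyn_system X f" "minimal_set X f M" shows "compact M"
proof -
  have "M = X \<inter> M" "closed M" using assms(2) unfolding minimal_set_def by auto
  thus ?thesis using assms(1) compact_Int_closed unfolding dyn_system_def by metis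
qed

lemma oc_compact:
  assumes "dyn_system X f" "y \<in> X" shows "compact (orbit_closure f y)"
proof -
  have "orbit_closure f y = X \<inter> orbit_closure f y" using oc_sub[OF assms] by blast
  thus ?thesis using assms(1) compact_Int_closed oc_closed unfolding dyn_system_def by metis
qed

lemma main1:
  assumes ds: "dyn_system X f" and Mx: "minimal_set X f Mx" and xM: "x \<in> Mx"
    and sp: "(x, y) \<in> SProx X f"
  shows "Mx \<subseteq> orbit_closure f y \<and> (\<forall>M. minimal_set X f M \<and> M \<subseteq> orbit_closure f y \<longrightarrow> M = Mx)"
proof -
  have yX: "y \<in> X" and syn: "\<And>e. e > 0 \<Longrightarrow> syndetic {n. dist ((f ^^ n) x) ((f ^^ n) y) < e}"
    using sp unfolding SProx_def by auto
  have fX: "f ` X \<subseteq> X" and cf: "continuous_on X f" using ds unfolding dyn_system_def by auto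
  have MxP: "Mx \<noteq> {}" "Mx \<subseteq> X" "closed Mx" "f ` Mx \<subseteq> Mx"
    and Mxmin: "\<And>N. N \<noteq> {} \<Longrightarrow> N \<subseteq> Mx \<Longrightarrow> closed N \<Longrightarrow> f ` N \<subseteq> N \<Longrightarrow> N = Mx"
    using Mx unfolding minimal_set_def by blast+
  have ocinv: "f ` orbit_closure f y \<subseteq> orbit_closure f y" by (rule oc_inv[OF ds yX])
  have xn: "\<And>n. (f^^n) x \<in> Mx" using funpow_inv[OF MxP(4)] xM by blast
  have yn: "\<And>n. (f^^n) y \<in> orbit_closure f y" using funpow_inv[OF ocinv] oc_self by blast
  have cMx: "compact Mx" by (rule minset_compact[OF ds Mx])
  have coc: "compact (orbit_closure f y)" by (rule oc_compact[OF ds yX])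
  have A: "Mx \<inter> orbit_closure f y \<noteq> {}"
  proof
    assume dis: "Mx \<inter> orbit_closure f y = {}"
    obtain d where d: "d > 0" "\<forall>p\<in>Mx. \<forall>q\<in>orbit_closure f y. d \<le> dist p q"
      using sep_compact[OF cMx coc dis MxP(1)] oc_self by blast
    have "thick UNIV" unfolding thick_def by blast
    then obtain n where "dist ((f ^^ n) x) ((f ^^ n) y) < d"
      using syn[OF d(1)] unfolding syndetic_def by blast
    thus False using d(2) xn yn by (meson not_le)
  qed
  have B: "Mx \<subseteq> orbit_closure f y"
  proof -
    have "Mx \<inter> orbit_closure f y = Mx"
      by (rule Mxmin) (use A MxP ocinv oc_closed[of f y] closed_Int in auto)
    thus ?thesis by blast
  qed
  have C: "M = Mx" if M: "minimal_set X f M" "M \<subseteq> orbit_closure f y" for M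
  proof -
    have MP: "M \<noteq> {}" "M \<subseteq> X" "closed M" "f ` M \<subseteq> M"
      and Mmin: "\<And>N. N \<noteq> {} \<Longrightarrow> N \<subseteq> M \<Longrightarrow> closed N \<Longrightarrow> f ` N \<subseteq> N \<Longrightarrow> N = M"
      using M(1) unfolding minimal_set_def by blast+
    show ?thesis
    proof (cases "M \<inter> Mx = {}")
      case False
      have "M \<inter> Mx = M" by (rule Mmin) (use False MP MxP closed_Int in auto)
      moreover have "M \<inter> Mx = Mx" by (rule Mxmin) (use False MP MxP closed_Int in auto)
      ultimately show ?thesis by simp
    next
      case True
      obtain d where d: "d > 0" "\<forall>p\<in>M. \<forall>q\<in>Mx. d \<le> dist p q"
        using sep_compact[OF minset_compact[OF ds M(1)] cMx True MP(1) MxP(1)] by blast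
      define e where "e = d / 3"
      have e: "e > 0" using d e_def by simp
      define T where "T = {n. \<exists>p\<in>M. dist ((f ^^ n) y) p < e}"
      have "thick T" unfolding thick_def
      proof
        fix L
        obtain q where q: "q \<in> M" using MP(1) by blast
        have qX: "q \<in> X" using q MP(2) by blast
        obtain \<delta> where dl: "\<delta> > 0" "\<forall>w\<in>X. dist w q < \<delta> \<longrightarrow> (\<forall>i<L. dist ((f^^i) w) ((f^^i) q) < e)"
          using window_cont[of X "\<lambda>i. f^^i", OF funpow_cont[OF cf fX] qX e] by blast
        have "q \<in> orbit_closure f y" using q M(2) by blast
        then obtain m where m: "dist ((f^^m) y) q < \<delta>"
          using dl(1) unfolding orbit_closure_def closure_approachable by blast
        have wX: "(f^^m) y \<in> X" using funpow_X[OF fX yX] .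
        have "{m..<m+L} \<subseteq> T"
        proof
          fix n assume n: "n \<in> {m..<m+L}"
          define i where "i = n - m"
          have i: "i < L" "n = i + m" using n i_def by auto
          have "dist ((f^^i) ((f^^m) y)) ((f^^i) q) < e" using dl(2) wX m i(1) by blast
          moreover have "(f^^i) q \<in> M" using funpow_inv[OF MP(4)] q by blast
          ultimately show "n \<in> T" unfolding T_def using i(2) funpow_apply_add[where f=f and k=i and m=m and y=y] by auto
        qed
        thus "\<exists>n. {n..<n + L} \<subseteq> T" by blast
      qed
      then obtain n where n: "dist ((f ^^ n) x) ((f ^^ n) y) < e" "n \<in> T"
        using syn[OF e] unfolding syndetic_def by blast
      then obtain p where p: "p \<in> M" "dist ((f ^^ n) y) p < e" unfolding T_def by blast
      have "dist p ((f ^^ n) x) \<le> dist p ((f ^^ n) y) + dist ((f ^^ n) y) ((f ^^ n) x)"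
        by (rule dist_triangle)
      also have "\<dots> < 2 * e" using n(1) p(2) by (simp add: dist_commute)
      also have "\<dots> < d" using e_def d(1) by simp
      finally have "dist p ((f ^^ n) x) < d" .
      moreover have "d \<le> dist p ((f ^^ n) x)" using d(2) p(1) xn by blast
      ultimately show ?thesis by simp
    qed
  qed
  show ?thesis using B C by blast
qed

lemma main2:
  assumes ds: "dyn_system X f" and fx: "f x = x" and y: "y \<in> SProx_at X f x"
    and z: "z \<in> orbit_closure f y"
  shows "z \<in> SProx_at X f x"
proof -
  have xX: "x \<in> X" and yX: "y \<in> X" and syn: "\<And>e. e > 0 \<Longrightarrow> syndetic {n. dist ((f ^^ n) x) ((f ^^ n) y) < e}"
    using y unfolding SProx_def SProx_at_def by auto
  have fX: "f ` X \<subseteq> X" and cf: "continuous_on X f" and cX: "closed X"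
    using ds compact_imp_closed unfolding dyn_system_def by auto
  have zX: "z \<in> X" using oc_sub[OF ds yX] z by blast
  have "syndetic {n. dist ((f ^^ n) x) ((f ^^ n) z) < e}" if e: "e > 0" for e
  proof -
    have "syndetic {n. dist x ((f ^^ n) y) < e/2}"
      using syn[of "e/2"] e funpow_fix[where f=f and x=x, OF fx] by simp
    then obtain L where L: "\<forall>n. \<exists>j. n \<le> j \<and> j < n + L \<and> dist x ((f ^^ j) y) < e/2"
      using synd_gap by blast
    have "\<exists>j. n \<le> j \<and> j < n + L \<and> dist x ((f ^^ j) z) \<le> e/2" for n
    proof -
      define C where "C = (\<Union>j\<in>{n..<n+L}. X \<inter> (f^^j) -` cball x (e/2))"
      have cC: "closed C" unfolding C_def
        by (intro closed_UN finite_atLeastLessThan ballI continuous_closed_preimage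
            funpow_cont[OF cf fX] cX closed_cball)
      have "{(f ^^ m) y |m. True} \<subseteq> C"
      proof
        fix w assume "w \<in> {(f ^^ m) y |m. True}"
        then obtain m where w: "w = (f^^m) y" by blast
        obtain j' where j': "n + m \<le> j'" "j' < n + m + L" "dist x ((f ^^ j') y) < e/2"
          using L by blast
        define j where "j = j' - m"
        have j: "n \<le> j" "j < n + L" "j' = j + m" using j' j_def by auto
        have "(f^^j) w = (f^^j') y" using w j(3) funpow_apply_add[where f=f and k=j and m=m and y=y] by simp
        moreover have "w \<in> X" using w funpow_X[OF fX yX] by simp
        moreover have "dist x ((f^^j) w) \<le> e/2" using j'(3) calculation(1) by simp
        ultimately have "w \<in> X \<inter> (f^^j) -` cball x (e/2)" by (simp add: mem_cball)
        moreover have "j \<in> {n..<n+L}" using j by simp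
        ultimately show "w \<in> C" unfolding C_def by blast
      qed
      hence "orbit_closure f y \<subseteq> C" unfolding orbit_closure_def using cC closure_minimal by blast
      hence "z \<in> C" using z by blast
      thus ?thesis unfolding C_def by (auto simp: mem_cball)
    qed
    hence "\<forall>n. \<exists>j. n \<le> j \<and> j < n + L \<and> j \<in> {n. dist ((f ^^ n) x) ((f ^^ n) z) < e}"
      using e funpow_fix[where f=f and x=x, OF fx] by (metis (mono_tags, lifting) field_sum_of_halves half_gt_zero
            less_add_same_cancel1 mem_Collect_eq order_le_less_trans)
    thus ?thesis by (rule gap_synd)
  qed
  thus ?thesis unfolding SProx_at_def SProx_def using xX zX by auto
qed

theorem proposition7p4:
  fixes X :: "'a::metric_space set" and f :: "'a \<Rightarrow> 'a" and x :: 'a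
  assumes "dyn_system X f"
    and "minimal_point X f x"
  shows "(\<forall>y. (x, y) \<in> SProx X f \<longrightarrow>
            minimal_set X f (orbit_closure f x) \<and>
            orbit_closure f x \<subseteq> orbit_closure f y \<and>
            (\<forall>M. minimal_set X f M \<and> M \<subseteq> orbit_closure f y \<longrightarrow> M = orbit_closure f x))
       \<and> (f x = x \<longrightarrow>
            (\<forall>y \<in> SProx_at X f x.
               x \<in> orbit_closure f y \<and>
               (\<forall>z. minimal_point X f z \<and> z \<in> orbit_closure f y \<longrightarrow> z = x))
            \<and> SProx_at X f x = (\<Union>y \<in> SProx_at X f x. orbit_closure f y))"
proof -
  note ds = assms(1)
  obtain M0 where M0: "minimal_set X f M0" "x \<in> M0"
    using assms(2) unfolding minimal_point_def by blast
  have ocx: "orbit_closure f x = M0" by (rule minimal_oc[OF ds M0])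
  have P1: "minimal_set X f (orbit_closure f x) \<and>
            orbit_closure f x \<subseteq> orbit_closure f y \<and>
            (\<forall>M. minimal_set X f M \<and> M \<subseteq> orbit_closure f y \<longrightarrow> M = orbit_closure f x)"
    if sp: "(x, y) \<in> SProx X f" for y
    using main1[OF ds M0 sp] M0(1) ocx by simp
  have P2: "(\<forall>y \<in> SProx_at X f x.
               x \<in> orbit_closure f y \<and>
               (\<forall>z. minimal_point X f z \<and> z \<in> orbit_closure f y \<longrightarrow> z = x))
            \<and> SProx_at X f x = (\<Union>y \<in> SProx_at X f x. orbit_closure f y)"
    if fx: "f x = x"
  proof -
    have "{(f ^^ n) x |n. True} = {x}" using funpow_fix[where f=f and x=x, OF fx] by auto
    hence ocs: "orbit_closure f x = {x}" unfolding orbit_closure_def by simp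
    have A: "x \<in> orbit_closure f y \<and>
               (\<forall>z. minimal_point X f z \<and> z \<in> orbit_closure f y \<longrightarrow> z = x)"
      if y: "y \<in> SProx_at X f x" for y
    proof -
      have sp: "(x, y) \<in> SProx X f" using y unfolding SProx_at_def by simp
      have yX: "y \<in> X" using sp unfolding SProx_def by simp
      have "x \<in> orbit_closure f y" using P1[OF sp] ocs by simp
      moreover have "z = x" if z: "minimal_point X f z" "z \<in> orbit_closure f y" for z
      proof -
        obtain M where M: "minimal_set X f M" "z \<in> M" using z(1) unfolding minimal_point_def by blast
        have "M = orbit_closure f z" using minimal_oc[OF ds M] by simp
        also have "\<dots> \<subseteq> orbit_closure f y" by (rule oc_min[OF oc_closed oc_inv[OF ds yX] z(2)])
        finally have "M = {x}" using P1[OF sp] M(1) ocs by blast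
        thus ?thesis using M(2) by simp
      qed
      ultimately show ?thesis by blast
    qed
    have B: "SProx_at X f x = (\<Union>y \<in> SProx_at X f x. orbit_closure f y)"
    proof
      show "SProx_at X f x \<subseteq> (\<Union>y \<in> SProx_at X f x. orbit_closure f y)" using oc_self by blast
      show "(\<Union>y \<in> SProx_at X f x. orbit_closure f y) \<subseteq> SProx_at X f x"
        using main2[OF ds fx] by blast
    qed
    show ?thesis using A B by blast
  qed
  show ?thesis using P1 P2 by blast
qed

end
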